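(* For $n\ge 2$, there is a bijection between the set of signed permutations $\pi=\pi_1\pi_2\cdots\pi_{n-1}\pi_n$ of $\{0,1,\dots,n-1\}$ with $\pi_n=0$ (unbarred) that are representations of signed skew derangements on $[n]$, and the set of derangements of type $B$ on $[n-1]$.
   Context: A signed permutation on a set $S$ of integers is an arrangement of the elements of $S$ in which some entries carry a bar. A derangement of type $B$ on $[m]$ is a signed permutation $\tau_1\cdots\tau_m$ of $[m]$ with $\tau_i\neq i$ for all $i$ (where $\tau_i=\bar i$ is allowed). A signed set on $[n]$ is $[n]$ with some elements barred; for such $X$, $X-1$ is obtained by subtracting $1$ from each element using $\bar i-1=\overline{i-1}$. A signed skew derangement on $[n]$ is a bijection $f:X\to X-1$, for some signed set $X$ on $[n]$, with $f(x)\ne x$ for all $x\in X$. The representation of a bijection $f:X\to X-1$ is the signed permutation $\pi_1\cdots\pi_n$ of $\{0,\dots,n-1\}$ given by $\pi_i=f(\sigma_i)$, where $\sigma_i$ is the element of $X$ with underlying value $i$; this gives a bijection between all such maps $f$ (over all signed sets $X$) and all signed permutations of $\{0,\dots,n-1\}$. *)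

theory Defs
  imports Main
begin

text \<open>A signed element is a pair (value, barred); barred = True means the entry carries a bar.\<close>
type_synonym selem = "nat \<times> bool"

definition signed_perm :: "nat set \<Rightarrow> selem list \<Rightarrow> bool" where
  "signed_perm S \<pi> \<longleftrightarrow> distinct (map fst \<pi>) \<and> set (map fst \<pi>) = S"

text \<open>Derangements of type B on [m]: tau_i differs from the unbarred i (list index i-1 holds tau_i).\<close>
definition derangements_B :: "nat \<Rightarrow> selem list set" where
  "derangements_B m = {\<tau>. signed_perm {1..m} \<tau> \<and> (\<forall>i<m. \<tau> ! i \<noteq> (i + 1, False))}"

definition signed_set :: "nat \<Rightarrow> selem set \<Rightarrow> bool" where
  "signed_set n X \<longleftrightarrow> (\<exists>s. X = (\<lambda>i. (i, s i)) ` {1..n})"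

definition shift_down :: "selem set \<Rightarrow> selem set" where
  "shift_down X = (\<lambda>(i, b). (i - 1, b)) ` X"

definition signed_skew_derangement :: "nat \<Rightarrow> selem set \<Rightarrow> (selem \<Rightarrow> selem) \<Rightarrow> bool" where
  "signed_skew_derangement n X f \<longleftrightarrow>
     signed_set n X \<and> bij_betw f X (shift_down X) \<and> (\<forall>x\<in>X. f x \<noteq> x)"

definition representation :: "nat \<Rightarrow> selem set \<Rightarrow> (selem \<Rightarrow> selem) \<Rightarrow> selem list" where
  "representation n X f = map (\<lambda>i. f (THE x. x \<in> X \<and> fst x = i)) [1..<n+1]"

definition rep_skew_last0 :: "nat \<Rightarrow> selem list set" where
  "rep_skew_last0 n = {\<pi>. signed_perm {0..<n} \<pi> \<and> \<pi> ! (n - 1) = (0, False) \<and>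
      (\<exists>X f. signed_skew_derangement n X f \<and> \<pi> = representation n X f)}"

end

theory Submission
  imports Defs
begin

definition barof :: "selem list \<Rightarrow> nat \<Rightarrow> bool" where
  "barof \<pi> v \<longleftrightarrow> (v, True) \<in> set \<pi>"

lemma sp_snd:
  assumes "signed_perm S \<pi>" "x \<in> set \<pi>"
  shows "snd x = barof \<pi> (fst x)"
proof -
  obtain v b where x: "x = (v, b)" by (cases x)
  have inj: "inj_on fst (set \<pi>)" using assms(1) by (simp add: signed_perm_def distinct_map)
  show ?thesis
  proof (cases b)
    case True then show ?thesis using assms x by (simp add: barof_def)
  next
    case False
    have "(v, True) \<notin> set \<pi>"
    proof
      assume "(v, True) \<in> set \<pi>"
      with inj assms(2) x False have "(v,True) = (v,b)" by (metis fst_conv inj_onD)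
      with False show False by simp
    qed
    then show ?thesis using x False by (simp add: barof_def)
  qed
qed

lemma sp_mem:
  assumes "signed_perm S \<pi>" "v \<in> S"
  shows "(v, barof \<pi> v) \<in> set \<pi>"
proof -
  from assms have "v \<in> fst ` set \<pi>" by (simp add: signed_perm_def)
  then obtain x where x: "x \<in> set \<pi>" "fst x = v" by auto
  then have "x = (v, barof \<pi> v)" using sp_snd[OF assms(1) x(1)] by (simp add: prod_eq_iff)
  with x show ?thesis by simp
qed

lemma sp_len:
  assumes "signed_perm {0..<n} \<pi>" shows "length \<pi> = n"
  using assms unfolding signed_perm_def
  by (metis card_atLeastLessThan diff_zero distinct_card length_map)

lemma sp_distinct: "signed_perm S \<pi> \<Longrightarrow> distinct \<pi>"
  by (simp add: signed_perm_def distinct_map)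

lemma rep_nth: "k < n \<Longrightarrow> representation n X f ! k = f (THE x. x \<in> X \<and> fst x = k + 1)"
  unfolding representation_def by (simp del: upt_Suc)

lemma rep_len: "length (representation n X f) = n"
  unfolding representation_def by (simp del: upt_Suc)

definition Rset :: "nat \<Rightarrow> selem list set" where
  "Rset n = {\<pi>. signed_perm {0..<n} \<pi> \<and> \<pi>!(n-1) = (0,False) \<and>
     (\<forall>i<n-1. \<not>(fst(\<pi>!i) = i+1 \<and> snd(\<pi>!i) = barof \<pi> i))}"

lemma rep_sub:
  assumes "\<pi> \<in> rep_skew_last0 n"
  shows "\<pi> \<in> Rset n"
proof -
  from assms have sp: "signed_perm {0..<n} \<pi>" and last: "\<pi> ! (n - 1) = (0, False)"
    and "\<exists>X f. signed_skew_derangement n X f \<and> \<pi> = representation n X f"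
    by (auto simp: rep_skew_last0_def)
  then obtain X f where sk: "signed_skew_derangement n X f" and pr: "\<pi> = representation n X f"
    by blast
  from sk obtain s where X: "X = (\<lambda>i. (i, s i)) ` {1..n}"
    and bij: "bij_betw f X (shift_down X)" and nf: "\<forall>x\<in>X. f x \<noteq> x"
    by (auto simp: signed_skew_derangement_def signed_set_def)
  have the: "(THE x. x \<in> X \<and> fst x = i) = (i, s i)" if "i \<in> {1..n}" for i
    by (rule the_equality) (use that X in auto)
  have pk: "\<pi> ! k = f (k+1, s (k+1))" if "k < n" for k
    using that pr the[of "k+1"] rep_nth[of k n X f] by simp
  have sd: "shift_down X = (\<lambda>j. (j - 1, s j)) ` {1..n}"
    by (auto simp: shift_down_def X image_image)
  have inX: "(k+1, s (k+1)) \<in> X" if "k < n" for k using that X by auto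
  have pk2: "\<exists>j\<in>{1..n}. \<pi> ! k = (j - 1, s j)" if "k < n" for k
  proof -
    have "f (k+1, s (k+1)) \<in> shift_down X" using bij_betw_apply[OF bij inX[OF that]] .
    then show ?thesis using pk[OF that] sd by auto
  qed
  have len: "length \<pi> = n" using sp_len[OF sp] .
  have cond: "\<not>(fst(\<pi>!i) = i+1 \<and> snd(\<pi>!i) = barof \<pi> i)" if i: "i < n - 1" for i
  proof
    assume h: "fst(\<pi>!i) = i+1 \<and> snd(\<pi>!i) = barof \<pi> i"
    have "i < n" using i by simp
    then obtain j where j: "j \<in> {1..n}" "\<pi> ! i = (j - 1, s j)" using pk2[of i] by blast
    have "(i, barof \<pi> i) \<in> set \<pi>" using sp_mem[OF sp, of i] i by auto
    then obtain k where k: "k < n" "\<pi> ! k = (i, barof \<pi> i)" using len by (auto simp: in_set_conv_nth)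
    obtain j' where j': "j' \<in> {1..n}" "\<pi> ! k = (j' - 1, s j')" using pk2[OF k(1)] by auto
    have "barof \<pi> i = s (i+1)" using k j' by auto
    then have "\<pi> ! i = (i+1, s (i+1))" using h j by (cases "\<pi>!i") auto
    then have "f (i+1, s(i+1)) = (i+1, s(i+1))" using pk[of i] i by auto
    then show False using nf inX[of i] i by auto
  qed
  show ?thesis using sp last cond by (simp add: Rset_def)
qed

lemma rep_sup:
  assumes n: "n \<ge> 2" and "\<pi> \<in> Rset n"
  shows "\<pi> \<in> rep_skew_last0 n"
proof -
  from assms have sp: "signed_perm {0..<n} \<pi>" and last: "\<pi> ! (n - 1) = (0, False)"
    and cond: "\<forall>i<n-1. \<not>(fst(\<pi>!i) = i+1 \<and> snd(\<pi>!i) = barof \<pi> i)"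
    by (auto simp: Rset_def)
  have len: "length \<pi> = n" using sp_len[OF sp] .
  have dist: "distinct \<pi>" using sp_distinct[OF sp] .
  define X where "X = (\<lambda>i. (i, barof \<pi> (i-1))) ` {1..n}"
  define f where "f = (\<lambda>x::selem. \<pi> ! (fst x - 1))"
  have ss: "signed_set n X" unfolding signed_set_def X_def by (rule exI[of _ "\<lambda>i. barof \<pi> (i-1)"]) (rule refl)
  have inj: "inj_on f X"
  proof (rule inj_onI)
    fix x y assume xy: "x \<in> X" "y \<in> X" "f x = f y"
    then obtain i j where ij: "i \<in> {1..n}" "j \<in> {1..n}" "x = (i, barof \<pi> (i-1))" "y = (j, barof \<pi> (j-1))"
      by (auto simp: X_def)
    have "\<pi> ! (i - 1) = \<pi> ! (j - 1)" using xy(3) ij by (simp add: f_def)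
    moreover have "i - 1 < length \<pi>" "j - 1 < length \<pi>" using ij len by auto
    ultimately have "i - 1 = j - 1" using nth_eq_iff_index_eq[OF dist] by blast
    then show "x = y" using ij by auto
  qed
  have setpi: "set \<pi> = (\<lambda>v. (v, barof \<pi> v)) ` {0..<n}"
  proof
    show "set \<pi> \<subseteq> (\<lambda>v. (v, barof \<pi> v)) ` {0..<n}"
    proof
      fix x assume x: "x \<in> set \<pi>"
      have "fst x \<in> {0..<n}" using x sp by (auto simp: signed_perm_def)
      moreover have "x = (fst x, barof \<pi> (fst x))" using sp_snd[OF sp x] by (simp add: prod_eq_iff)
      ultimately show "x \<in> (\<lambda>v. (v, barof \<pi> v)) ` {0..<n}" by blast
    qed
  next
    show "(\<lambda>v. (v, barof \<pi> v)) ` {0..<n} \<subseteq> set \<pi>" using sp_mem[OF sp] by auto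
  qed
  have img: "f ` X = shift_down X"
  proof -
    have "f ` X = (\<lambda>i. \<pi> ! (i - 1)) ` {1..n}" by (auto simp: f_def X_def image_image)
    also have "\<dots> = set \<pi>"
    proof
      show "(\<lambda>i. \<pi> ! (i - 1)) ` {1..n} \<subseteq> set \<pi>" using len by auto
      show "set \<pi> \<subseteq> (\<lambda>i. \<pi> ! (i - 1)) ` {1..n}"
      proof
        fix x assume "x \<in> set \<pi>"
        then obtain k where k: "k < n" "x = \<pi> ! k" using len by (auto simp: in_set_conv_nth)
        then show "x \<in> (\<lambda>i. \<pi> ! (i - 1)) ` {1..n}"
          by (intro image_eqI[of _ _ "k+1"]) auto
      qed
    qed
    also have "\<dots> = (\<lambda>v. (v, barof \<pi> v)) ` {0..<n}" by (rule setpi)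
    also have "\<dots> = shift_down X"
    proof -
      have "shift_down X = (\<lambda>i. (i - 1, barof \<pi> (i-1))) ` {1..n}"
        by (auto simp: shift_down_def X_def image_image)
      also have "\<dots> = (\<lambda>v. (v, barof \<pi> v)) ` ((\<lambda>i. i - 1) ` {1..n})" by (simp add: image_image)
      also have "(\<lambda>i. i - 1) ` {1..n} = {0..<n}"
      proof
        show "(\<lambda>i. i - 1) ` {1..n} \<subseteq> {0..<n}" by auto
        show "{0..<n} \<subseteq> (\<lambda>i. i - 1) ` {1..n}"
        proof
          fix v assume "v \<in> {0..<n}"
          then show "v \<in> (\<lambda>i. i - 1) ` {1..n}" by (intro image_eqI[of _ _ "v+1"]) auto
        qed
      qed
      finally show ?thesis by simp
    qed
    finally show ?thesis .
  qed
  have nf: "\<forall>x\<in>X. f x \<noteq> x"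
  proof
    fix x assume "x \<in> X"
    then obtain i where i: "i \<in> {1..n}" "x = (i, barof \<pi> (i-1))" by (auto simp: X_def)
    show "f x \<noteq> x"
    proof (cases "i = n")
      case True then show ?thesis using i last n by (auto simp: f_def)
    next
      case False
      then have "i - 1 < n - 1" using i by auto
      then have "\<not>(fst(\<pi>!(i-1)) = i-1+1 \<and> snd(\<pi>!(i-1)) = barof \<pi> (i-1))" using cond by blast
      then show ?thesis using i by (auto simp: f_def)
    qed
  qed
  have sk: "signed_skew_derangement n X f"
    unfolding signed_skew_derangement_def using ss nf bij_betw_imageI[OF inj img] by blast
  have the: "(THE x. x \<in> X \<and> fst x = i) = (i, barof \<pi> (i-1))" if "i \<in> {1..n}" for i
    by (rule the_equality) (use that in \<open>auto simp: X_def\<close>)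
  have rep: "\<pi> = representation n X f"
  proof (rule nth_equalityI)
    show "length \<pi> = length (representation n X f)" using len rep_len by simp
    fix k assume "k < length \<pi>"
    then have k: "k < n" using len by simp
    then show "\<pi> ! k = representation n X f ! k"
      using the[of "k+1"] rep_nth[of k n X f] by (simp add: f_def)
  qed
  show ?thesis using sp last sk rep unfolding rep_skew_last0_def by blast
qed

lemma rep_eq: "n \<ge> 2 \<Longrightarrow> rep_skew_last0 n = Rset n"
  using rep_sub rep_sup by blast


lemma sp_app:
  assumes "n \<ge> 2"
  shows "signed_perm {0..<n} (\<rho> @ [(0,False)]) = signed_perm {1..n-1} \<rho>"
proof
  assume h: "signed_perm {0..<n} (\<rho> @ [(0,False)])"
  then have d: "distinct (map fst \<rho>)" "0 \<notin> fst ` set \<rho>" and s: "insert 0 (fst ` set \<rho>) = {0..<n}"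
    by (auto simp: signed_perm_def)
  have "fst ` set \<rho> = {1..n-1}"
  proof
    show "fst ` set \<rho> \<subseteq> {1..n-1}"
    proof
      fix v assume v: "v \<in> fst ` set \<rho>"
      have "v \<in> insert 0 (fst ` set \<rho>)" using v by blast
      then have "v \<in> {0..<n}" using s by simp
      moreover have "v \<noteq> 0" using v d(2) by metis
      ultimately show "v \<in> {1..n-1}" by auto
    qed
    show "{1..n-1} \<subseteq> fst ` set \<rho>"
    proof
      fix v assume v: "v \<in> {1..n-1}"
      then have "v \<in> insert 0 (fst ` set \<rho>)" using s by auto
      then show "v \<in> fst ` set \<rho>" using v by auto
    qed
  qed
  then show "signed_perm {1..n-1} \<rho>" using d by (simp add: signed_perm_def)
next
  assume h: "signed_perm {1..n-1} \<rho>"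
  then have d: "distinct (map fst \<rho>)" and s: "fst ` set \<rho> = {1..n-1}" by (auto simp: signed_perm_def)
  have "insert 0 {1..n-1} = {0..<n}" using assms by auto
  then show "signed_perm {0..<n} (\<rho> @ [(0,False)])" using d s by (auto simp: signed_perm_def)
qed

lemma barof_app: "barof (\<rho> @ [(0,False)]) = barof \<rho>"
  by (auto simp: barof_def fun_eq_iff)

definition R' :: "nat \<Rightarrow> selem list set" where
  "R' m = {\<rho>. signed_perm {1..m} \<rho> \<and> (\<forall>i<m. \<not>(fst(\<rho>!i) = i+1 \<and> snd(\<rho>!i) = barof \<rho> i))}"

lemma Rset_R':
  assumes "n \<ge> 2"
  shows "bij_betw (\<lambda>\<rho>. \<rho> @ [(0,False)]) (R' (n-1)) (Rset n)"
proof (rule bij_betw_imageI)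
  show "inj_on (\<lambda>\<rho>. \<rho> @ [(0,False)]) (R' (n-1))" by (auto intro: inj_onI)
  show "(\<lambda>\<rho>. \<rho> @ [(0,False)]) ` R' (n-1) = Rset n"
  proof
    show "(\<lambda>\<rho>. \<rho> @ [(0,False)]) ` R' (n-1) \<subseteq> Rset n"
    proof
      fix \<pi> assume "\<pi> \<in> (\<lambda>\<rho>. \<rho> @ [(0,False)]) ` R' (n-1)"
      then obtain \<rho> where r: "\<rho> \<in> R' (n-1)" "\<pi> = \<rho> @ [(0,False)]" by blast
      then have sp: "signed_perm {1..n-1} \<rho>" by (simp add: R'_def)
      have len: "length \<rho> = n - 1" using sp_len[of n "\<rho> @ [(0,False)]"] sp sp_app[OF assms] by simp
      show "\<pi> \<in> Rset n" using r sp len sp_app[OF assms]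
        by (auto simp: Rset_def R'_def nth_append barof_app)
    qed
    show "Rset n \<subseteq> (\<lambda>\<rho>. \<rho> @ [(0,False)]) ` R' (n-1)"
    proof
      fix \<pi> assume p: "\<pi> \<in> Rset n"
      then have sp: "signed_perm {0..<n} \<pi>" and l: "\<pi> ! (n-1) = (0,False)" by (auto simp: Rset_def)
      have len: "length \<pi> = n" using sp_len[OF sp] .
      define \<rho> where "\<rho> = take (n-1) \<pi>"
      have e: "\<pi> = \<rho> @ [(0,False)]"
      proof -
        have "\<pi> = take (n-1) \<pi> @ drop (n-1) \<pi>" by simp
        moreover have "drop (n-1) \<pi> = [\<pi> ! (n-1)]"
          using len assms by (metis Cons_nth_drop_Suc One_nat_def Suc_pred diff_less drop_all le_refl
              less_le_trans numeral_2_eq_2 zero_less_Suc less_numeral_extra(1) one_le_numeral)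
        ultimately show ?thesis using l \<rho>_def by metis
      qed
      have lr: "length \<rho> = n - 1" using len assms by (simp add: \<rho>_def)
      have "\<rho> \<in> R' (n-1)" using p sp_app[OF assms, of \<rho>] lr unfolding e
        by (auto simp: Rset_def R'_def nth_append barof_app)
      then show "\<pi> \<in> (\<lambda>\<rho>. \<rho> @ [(0,False)]) ` R' (n-1)" using e by blast
    qed
  qed
qed

fun cc :: "(nat \<Rightarrow> bool) \<Rightarrow> nat \<Rightarrow> bool" where
  "cc p 0 = False"
| "cc p (Suc j) = (cc p j \<noteq> p (Suc j))"

lemma cc_eq:
  assumes "q 0 = False" "\<And>j. Suc j \<le> m \<Longrightarrow> p (Suc j) = (q (Suc j) \<noteq> q j)"
  shows "j \<le> m \<Longrightarrow> cc p j = q j"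
  by (induction j) (use assms in auto)

definition G :: "selem list \<Rightarrow> selem list" where
  "G \<rho> = map (\<lambda>x. (fst x, snd x \<noteq> barof \<rho> (fst x - 1))) \<rho>"

definition H :: "selem list \<Rightarrow> selem list" where
  "H \<tau> = map (\<lambda>x. (fst x, cc (barof \<tau>) (fst x))) \<tau>"

lemma G_fst: "map fst (G \<rho>) = map fst \<rho>" by (simp add: G_def)
lemma H_fst: "map fst (H \<rho>) = map fst \<rho>" by (simp add: H_def)

lemma sp_fst: "map fst a = map fst b \<Longrightarrow> signed_perm S a = signed_perm S b"
  by (simp add: signed_perm_def)

lemma barof0: "signed_perm {1..m} \<rho> \<Longrightarrow> barof \<rho> 0 = False"
  by (force simp: barof_def signed_perm_def)

lemma barof_G:
  assumes sp: "signed_perm {1..m} \<rho>" and v: "v \<in> {1..m}"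
  shows "barof (G \<rho>) v = (barof \<rho> v \<noteq> barof \<rho> (v-1))"
proof -
  have "(v, barof \<rho> v) \<in> set \<rho>" using sp_mem[OF sp v] .
  then have m: "(v, barof \<rho> v \<noteq> barof \<rho> (v-1)) \<in> set (G \<rho>)" by (force simp: G_def)
  have sp': "signed_perm {1..m} (G \<rho>)" using sp sp_fst[OF G_fst] by blast
  show ?thesis using sp_snd[OF sp' m] by simp
qed

lemma barof_H:
  assumes sp: "signed_perm {1..m} \<tau>" and u: "u \<le> m"
  shows "barof (H \<tau>) u = cc (barof \<tau>) u"
proof (cases "u = 0")
  case True
  have sp': "signed_perm {1..m} (H \<tau>)" using sp sp_fst[OF H_fst] by blast
  show ?thesis using True barof0[OF sp'] by simp
next
  case False
  then have v: "u \<in> {1..m}" using u by auto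
  have "(u, barof \<tau> u) \<in> set \<tau>" using sp_mem[OF sp v] .
  then have m: "(u, cc (barof \<tau>) u) \<in> set (H \<tau>)" by (force simp: H_def)
  have sp': "signed_perm {1..m} (H \<tau>)" using sp sp_fst[OF H_fst] by blast
  show ?thesis using sp_snd[OF sp' m] by simp
qed

lemma sp_range: "signed_perm S \<rho> \<Longrightarrow> x \<in> set \<rho> \<Longrightarrow> fst x \<in> S"
  by (auto simp: signed_perm_def)

lemma HG:
  assumes sp: "signed_perm {1..m} \<rho>"
  shows "H (G \<rho>) = \<rho>"
proof -
  have cc: "cc (barof (G \<rho>)) j = barof \<rho> j" if "j \<le> m" for j
    by (rule cc_eq[where q="barof \<rho>" and m=m]) (use barof0[OF sp] barof_G[OF sp] that in auto)
  have "H (G \<rho>) = map (\<lambda>x. (fst x, cc (barof (G \<rho>)) (fst x))) \<rho>"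
    by (simp add: H_def G_def)
  also have "\<dots> = \<rho>"
  proof (rule map_idI)
    fix x assume x: "x \<in> set \<rho>"
    have "fst x \<le> m" using sp_range[OF sp x] by auto
    then show "(fst x, cc (barof (G \<rho>)) (fst x)) = x"
      using cc sp_snd[OF sp x] by (simp add: prod_eq_iff)
  qed
  finally show ?thesis .
qed

lemma GH:
  assumes sp: "signed_perm {1..m} \<tau>"
  shows "G (H \<tau>) = \<tau>"
proof -
  have "G (H \<tau>) = map (\<lambda>x. (fst x, cc (barof \<tau>) (fst x) \<noteq> barof (H \<tau>) (fst x - 1))) \<tau>"
    by (simp add: H_def G_def)
  also have "\<dots> = \<tau>"
  proof (rule map_idI)
    fix x assume x: "x \<in> set \<tau>"
    have r: "fst x \<in> {1..m}" using sp_range[OF sp x] .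
    then obtain u where u: "fst x = Suc u" "u \<le> m" by (cases "fst x") auto
    show "(fst x, cc (barof \<tau>) (fst x) \<noteq> barof (H \<tau>) (fst x - 1)) = x"
      using barof_H[OF sp u(2)] u sp_snd[OF sp x]
      by (cases "cc (barof \<tau>) u"; cases "barof \<tau> (Suc u)") (simp_all add: prod_eq_iff)
  qed
  finally show ?thesis .
qed

lemma G_in:
  assumes "\<rho> \<in> R' m" shows "G \<rho> \<in> derangements_B m"
proof -
  have sp: "signed_perm {1..m} \<rho>" and c: "\<forall>i<m. \<not>(fst(\<rho>!i) = i+1 \<and> snd(\<rho>!i) = barof \<rho> i)"
    using assms by (auto simp: R'_def)
  have len: "length \<rho> = m" using sp unfolding signed_perm_def
    by (metis card_atLeastAtMost diff_Suc_1 distinct_card length_map)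
  have sp': "signed_perm {1..m} (G \<rho>)" using sp sp_fst[OF G_fst] by blast
  have "G \<rho> ! i \<noteq> (i + 1, False)" if i: "i < m" for i
    using c i len by (auto simp: G_def)
  then show ?thesis using sp' by (simp add: derangements_B_def)
qed

lemma H_in:
  assumes "\<tau> \<in> derangements_B m" shows "H \<tau> \<in> R' m"
proof -
  have sp: "signed_perm {1..m} \<tau>" and c: "\<forall>i<m. \<tau> ! i \<noteq> (i + 1, False)"
    using assms by (auto simp: derangements_B_def)
  have len: "length \<tau> = m" using sp unfolding signed_perm_def
    by (metis card_atLeastAtMost diff_Suc_1 distinct_card length_map)
  have sp': "signed_perm {1..m} (H \<tau>)" using sp sp_fst[OF H_fst] by blast
  have "\<not>(fst(H \<tau>!i) = i+1 \<and> snd(H \<tau>!i) = barof (H \<tau>) i)" if i: "i < m" for i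
  proof
    assume h: "fst(H \<tau>!i) = i+1 \<and> snd(H \<tau>!i) = barof (H \<tau>) i"
    have e: "H \<tau> ! i = (fst (\<tau>!i), cc (barof \<tau>) (fst (\<tau>!i)))" using i len by (simp add: H_def)
    have f: "fst (\<tau>!i) = i+1" using h e by simp
    have "cc (barof \<tau>) (i+1) = cc (barof \<tau>) i" using h e f barof_H[OF sp, of i] i by simp
    then have b: "barof \<tau> (i+1) = False" by (cases "cc (barof \<tau>) i") auto
    have "\<tau>!i \<in> set \<tau>" using i len by simp
    then have "snd (\<tau>!i) = False" using sp_snd[OF sp] f b by metis
    then have "\<tau>!i = (i+1, False)" using f by (simp add: prod_eq_iff)
    then show False using c i by blast
  qed
  then show ?thesis using sp' by (simp add: R'_def)
qed

lemma R'_D: "bij_betw G (R' m) (derangements_B m)"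
proof (rule bij_betw_byWitness[where f' = H])
  show "\<forall>a\<in>R' m. H (G a) = a" using HG by (auto simp: R'_def)
  show "\<forall>a'\<in>derangements_B m. G (H a') = a'" using GH by (auto simp: derangements_B_def)
  show "G ` R' m \<subseteq> derangements_B m" using G_in by blast
  show "H ` derangements_B m \<subseteq> R' m" using H_in by blast
qed

theorem lemma2:
  fixes n :: nat
  assumes "n \<ge> 2"
  shows "\<exists>g. bij_betw g (rep_skew_last0 n) (derangements_B (n - 1))"
proof -
  have "bij_betw (G \<circ> the_inv_into (R' (n-1)) (\<lambda>\<rho>. \<rho> @ [(0,False)])) (Rset n) (derangements_B (n-1))"
    by (rule bij_betw_trans[OF bij_betw_the_inv_into[OF Rset_R'[OF assms]] R'_D])
  then show ?thesis using rep_eq[OF assms] by metis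
qed

end
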